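(* Let $s_0<s_1<\dots<s_k<\dots$ satisfy $\lim_{k\to\infty}s_k=\infty$ and $s_{k+1}-s_k\le h$ for all $k\ge0$, where $h>0$. For each $k\ge0$ let there be finitely many points $s_k=t^{(k)}_0<t^{(k)}_1<\dots<t^{(k)}_{n_k}=s_{k+1}$. Let $W:[s_0,\infty)\to[0,\infty)$ be absolutely continuous on each interval $[t^{(k)}_j,t^{(k)}_{j+1})$, $0\le j\le n_k-1$, with left limits satisfying $$\lim_{t\uparrow t^{(k)}_j}W(t)\ge W(t^{(k)}_j)\quad\text{for all }k\ge0,\ 1\le j\le n_k.$$ Let $\delta_0>\delta_1>0$ and assume that for all $k\ge0$ and $0\le j\le n_k-1$, $$\dot W(t)\le-2\delta_0W(t)+2\delta_1\sup_{s_k\le\theta\le t}W(\theta)\quad\text{for almost all }t\in[t^{(k)}_j,t^{(k)}_{j+1}).$$ Then $W(t)\le e^{-2\delta_\tau(t-s_0)}W(s_0)$ for all $t\ge s_0$, where $\delta_\tau>0$ is the unique positive solution of $\delta_\tau=\delta_0-\delta_1e^{2\delta_\tau h}$. *)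

theory Defs
  imports "HOL-Analysis.Analysis"
begin

definition abs_cont_on :: "(real \<Rightarrow> real) \<Rightarrow> real set \<Rightarrow> bool" where
  "abs_cont_on f I \<longleftrightarrow>
     (\<forall>\<epsilon>>0. \<exists>\<delta>>0. \<forall>(m::nat) (a::nat \<Rightarrow> real) (b::nat \<Rightarrow> real).
        (\<forall>i<m. a i < b i \<and> {a i..b i} \<subseteq> I) \<longrightarrow>
        (\<forall>i<m. \<forall>j<m. i \<noteq> j \<longrightarrow> b i \<le> a j \<or> b j \<le> a i) \<longrightarrow>
        (\<Sum>i<m. b i - a i) < \<delta> \<longrightarrow>
        (\<Sum>i<m. \<bar>f (b i) - f (a i)\<bar>) < \<epsilon>)"

definition delta_tau :: "real \<Rightarrow> real \<Rightarrow> real \<Rightarrow> real" where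
  "delta_tau \<delta>0 \<delta>1 h = (THE x. x > 0 \<and> x = \<delta>0 - \<delta>1 * exp (2 * x * h))"

end

theory Submission
  imports Defs
begin



lemma AC_mono: assumes "abs_cont_on f J" "I \<subseteq> J" shows "abs_cont_on f I"
  unfolding abs_cont_on_def
proof (intro allI impI)
  fix e :: real assume "e > 0"
  then obtain d where d: "d > 0" and H: "\<forall>(m::nat) (a::nat \<Rightarrow> real) (b::nat \<Rightarrow> real).
        (\<forall>i<m. a i < b i \<and> {a i..b i} \<subseteq> J) \<longrightarrow>
        (\<forall>i<m. \<forall>j<m. i \<noteq> j \<longrightarrow> b i \<le> a j \<or> b j \<le> a i) \<longrightarrow>
        (\<Sum>i<m. b i - a i) < d \<longrightarrow>
        (\<Sum>i<m. \<bar>f (b i) - f (a i)\<bar>) < e"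
    using assms(1) unfolding abs_cont_on_def by blast
  show "\<exists>\<delta>>0. \<forall>(m::nat) (a::nat \<Rightarrow> real) (b::nat \<Rightarrow> real).
        (\<forall>i<m. a i < b i \<and> {a i..b i} \<subseteq> I) \<longrightarrow>
        (\<forall>i<m. \<forall>j<m. i \<noteq> j \<longrightarrow> b i \<le> a j \<or> b j \<le> a i) \<longrightarrow>
        (\<Sum>i<m. b i - a i) < \<delta> \<longrightarrow>
        (\<Sum>i<m. \<bar>f (b i) - f (a i)\<bar>) < e"
  proof (intro exI[of _ d] conjI d allI impI)
    fix m and a b :: "nat \<Rightarrow> real"
    assume 1: "\<forall>i<m. a i < b i \<and> {a i..b i} \<subseteq> I"
      and 2: "\<forall>i<m. \<forall>j<m. i \<noteq> j \<longrightarrow> b i \<le> a j \<or> b j \<le> a i" and 3: "(\<Sum>i<m. b i - a i) < d"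
    have 4: "\<forall>i<m. a i < b i \<and> {a i..b i} \<subseteq> J" using 1 assms(2) by (meson order_trans)
    show "(\<Sum>i<m. \<bar>f (b i) - f (a i)\<bar>) < e"
      by (rule mp[OF mp[OF mp[OF spec[OF spec[OF spec[OF H, of m], of a], of b] 4] 2] 3])
  qed
qed


lemma AC_cont:
  assumes ac: "abs_cont_on f I"
    and conv: "\<And>x y. x \<in> I \<Longrightarrow> y \<in> I \<Longrightarrow> x \<le> y \<Longrightarrow> {x..y} \<subseteq> I"
  shows "continuous_on I f"
  unfolding continuous_on_iff
proof (intro ballI allI impI)
  fix x e :: real assume x: "x \<in> I" and e: "e > 0"
  obtain d where d: "d > 0" and H: "\<forall>(m::nat) (a::nat \<Rightarrow> real) (b::nat \<Rightarrow> real).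
        (\<forall>i<m. a i < b i \<and> {a i..b i} \<subseteq> I) \<longrightarrow>
        (\<forall>i<m. \<forall>j<m. i \<noteq> j \<longrightarrow> b i \<le> a j \<or> b j \<le> a i) \<longrightarrow>
        (\<Sum>i<m. b i - a i) < d \<longrightarrow>
        (\<Sum>i<m. \<bar>f (b i) - f (a i)\<bar>) < e"
    using ac e unfolding abs_cont_on_def by blast
  show "\<exists>d>0. \<forall>x'\<in>I. dist x' x < d \<longrightarrow> dist (f x') (f x) < e"
  proof (intro exI[of _ d] conjI ballI impI d)
    fix x' assume x': "x' \<in> I" and dd: "dist x' x < d"
    show "dist (f x') (f x) < e"
    proof (cases "x' = x")
      case True then show ?thesis using e by simp
    next
      case False
      have A: "\<forall>i<(1::nat). min x x' < max x x' \<and> {min x x'..max x x'} \<subseteq> I"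
        using False conv x x' by (auto simp: min_def max_def)
      have B: "(\<Sum>i<(1::nat). max x x' - min x x') < d"
        using dd by (auto simp: dist_real_def min_def max_def)
      have H1: "(\<forall>i<(1::nat). min x x' < max x x' \<and> {min x x'..max x x'} \<subseteq> I) \<longrightarrow>
         (\<forall>i<(1::nat). \<forall>j<(1::nat). i \<noteq> j \<longrightarrow> max x x' \<le> min x x' \<or> max x x' \<le> min x x') \<longrightarrow>
         (\<Sum>i<(1::nat). max x x' - min x x') < d \<longrightarrow>
         (\<Sum>i<(1::nat). \<bar>f (max x x') - f (min x x')\<bar>) < e"
        by (rule spec[OF spec[OF spec[OF H, of 1], of "\<lambda>_. min x x'"], of "\<lambda>_. max x x'"])
      have "(\<Sum>i<(1::nat). \<bar>f (max x x') - f (min x x')\<bar>) < e"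
        using H1 A B by simp
      then show ?thesis by (auto simp: dist_real_def min_def max_def abs_minus_commute split: if_splits)
    qed
  qed
qed



lemma AC_diff_lip:
  assumes ac: "abs_cont_on f I" and L: "L \<ge> 0"
    and lip: "\<And>x y. x \<in> I \<Longrightarrow> y \<in> I \<Longrightarrow> x \<le> y \<Longrightarrow> \<bar>g y - g x\<bar> \<le> L * (y - x)"
  shows "abs_cont_on (\<lambda>x. f x - g x) I"
  unfolding abs_cont_on_def
proof (intro allI impI)
  fix e :: real assume e: "e > 0"
  obtain d where d: "d > 0" and H: "\<forall>(m::nat) (a::nat \<Rightarrow> real) (b::nat \<Rightarrow> real).
        (\<forall>i<m. a i < b i \<and> {a i..b i} \<subseteq> I) \<longrightarrow>
        (\<forall>i<m. \<forall>j<m. i \<noteq> j \<longrightarrow> b i \<le> a j \<or> b j \<le> a i) \<longrightarrow>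
        (\<Sum>i<m. b i - a i) < d \<longrightarrow>
        (\<Sum>i<m. \<bar>f (b i) - f (a i)\<bar>) < e/2"
  proof -
    have "e/2 > 0" using e by simp
    then show ?thesis using ac that unfolding abs_cont_on_def by blast
  qed
  define d' where "d' = min d (e / (2 * (L + 1)))"
  have d': "d' > 0" using d e L by (simp add: d'_def)
  have ALL: "(\<Sum>i<m. \<bar>f (b i) - g (b i) - (f (a i) - g (a i))\<bar>) < e"
    if 1: "\<forall>i<m. a i < b i \<and> {a i..b i} \<subseteq> I"
      and 2: "\<forall>i<m. \<forall>j<m. i \<noteq> j \<longrightarrow> b i \<le> a j \<or> b j \<le> a i"
      and 3: "(\<Sum>i<m. b i - a i) < d'" for m :: nat and a b :: "nat \<Rightarrow> real"
  proof -
    have f1: "(\<Sum>i<m. \<bar>f (b i) - f (a i)\<bar>) < e/2"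
    proof -
      have h3: "(\<Sum>i<m. b i - a i) < d" using 3 unfolding d'_def by linarith
      show ?thesis
        by (rule mp[OF mp[OF mp[OF spec[OF spec[OF spec[OF H, of m], of a], of b] 1] 2] h3])
    qed
    have Le: "L * (e / (2 * (L + 1))) < e / 2"
    proof -
      have "L * (e / (2 * (L + 1))) = (e/2) * (L / (L + 1))" using L by (simp add: field_simps)
      also have "\<dots> < (e/2) * 1" using L e by (intro mult_strict_left_mono) auto
      finally show ?thesis by simp
    qed
    have "(\<Sum>i<m. \<bar>g (b i) - g (a i)\<bar>) \<le> (\<Sum>i<m. L * (b i - a i))"
    proof (rule sum_mono)
      fix i assume "i \<in> {..<m}"
      then have ab: "a i < b i" "{a i..b i} \<subseteq> I" using 1 by auto
      then have "a i \<in> {a i..b i}" "b i \<in> {a i..b i}" by auto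
      with ab have "a i \<in> I" "b i \<in> I" "a i \<le> b i" by auto
      then show "\<bar>g (b i) - g (a i)\<bar> \<le> L * (b i - a i)" by (rule lip)
    qed
    also have "\<dots> = L * (\<Sum>i<m. b i - a i)" by (simp add: sum_distrib_left)
    also have "\<dots> \<le> L * d'" using 3 L by (simp add: mult_left_mono)
    also have "\<dots> \<le> L * (e / (2 * (L + 1)))" using L unfolding d'_def by (intro mult_left_mono) auto
    also have "\<dots> < e / 2" using Le by simp
    finally have g1: "(\<Sum>i<m. \<bar>g (b i) - g (a i)\<bar>) < e/2" .
    have X: "(\<Sum>i<m. \<bar>f (b i) - g (b i) - (f (a i) - g (a i))\<bar>)
        \<le> (\<Sum>i<m. \<bar>f (b i) - f (a i)\<bar> + \<bar>g (b i) - g (a i)\<bar>)"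
      by (rule sum_mono) linarith
    have Y: "(\<Sum>i<m. \<bar>f (b i) - f (a i)\<bar> + \<bar>g (b i) - g (a i)\<bar>) < e" using f1 g1 by (simp add: sum.distrib)
    from X Y show "(\<Sum>i<m. \<bar>f (b i) - g (b i) - (f (a i) - g (a i))\<bar>) < e" by linarith
  qed
  show "\<exists>\<delta>>0. \<forall>(m::nat) (a::nat\<Rightarrow>real) (b::nat\<Rightarrow>real). (\<forall>i<m. a i < b i \<and> {a i..b i} \<subseteq> I) \<longrightarrow>
        (\<forall>i<m. \<forall>j<m. i \<noteq> j \<longrightarrow> b i \<le> a j \<or> b j \<le> a i) \<longrightarrow>
        (\<Sum>i<m. b i - a i) < \<delta> \<longrightarrow>
        (\<Sum>i<m. \<bar>f (b i) - g (b i) - (f (a i) - g (a i))\<bar>) < e"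
    apply (intro exI[of _ d'] conjI allI impI d')
    apply (rule ALL)
      apply assumption+
    done
qed

lemma growth:
  fixes G :: "real \<Rightarrow> real"
  assumes cd: "c \<le> d" and cont: "continuous_on {c..d} G" and neg: "negligible (G ` E)"
    and der: "\<And>x. x \<in> {c..<d} \<Longrightarrow> x \<notin> E \<Longrightarrow> G x > 0 \<Longrightarrow>
                 \<exists>D<0. (G has_real_derivative D) (at x)"
  shows "G d \<le> max (G c) 0"
proof (rule ccontr)
  assume "\<not> ?thesis"
  then have lt: "max (G c) 0 < G d" by (simp only: not_le)
  have "{max (G c) 0<..<G d} \<subseteq> G ` E"
  proof
    fix y assume y: "y \<in> {max (G c) 0<..<G d}"
    define S where "S = {c..d} \<inter> G -` {..y}"
    have clS: "closed S" unfolding S_def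
      by (rule continuous_closed_preimage[OF cont]) auto
    have cS: "c \<in> S" using y cd by (auto simp: S_def)
    have bS: "bdd_above S" by (auto simp: S_def bdd_above_def)
    define u where "u = Sup S"
    have uS: "u \<in> S" unfolding u_def using closed_contains_Sup[OF _ bS clS] cS by blast
    have cu: "c \<le> u" unfolding u_def using cS bS by (simp add: cSup_upper)
    have Gu: "G u \<le> y" "u \<le> d" using uS by (auto simp: S_def)
    have ud: "u < d" using Gu y by (metis greaterThanLessThan_iff linorder_not_less order_antisym_conv)
    have right: "G x > y" if "u < x" "x \<le> d" for x
    proof (rule ccontr)
      assume "\<not> G x > y"
      then have "x \<in> S" using that cu by (auto simp: S_def)
      then have "x \<le> u" unfolding u_def using bS by (simp add: cSup_upper)
      then show False using that by simp
    qed
    have Gu2: "G u \<ge> y"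
    proof (rule ccontr)
      assume "\<not> G u \<ge> y"
      then have "y - G u > 0" by simp
      then obtain r where r: "r > 0" and rr: "\<forall>x'\<in>{c..d}. dist x' u < r \<longrightarrow> dist (G x') (G u) < y - G u"
        using cont cu Gu unfolding continuous_on_iff by (meson atLeastAtMost_iff)
      define x where "x = min (u + r/2) d"
      have "u < x" "x \<le> d" using r ud by (auto simp: x_def)
      moreover have "dist x u < r" using r ud by (auto simp: x_def dist_real_def)
      ultimately have "dist (G x) (G u) < y - G u" using rr cu by auto
      then have "G x < y" by (auto simp: dist_real_def)
      then show False using right \<open>u < x\<close> \<open>x \<le> d\<close> by fastforce
    qed
    have Gy: "G u = y" using Gu Gu2 by simp
    show "y \<in> G ` E"
    proof (cases "u \<in> E")
      case True then show ?thesis using Gy by blast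
    next
      case False
      have "G u > 0" using Gy y by simp
      then obtain D where D: "D < 0" "(G has_real_derivative D) (at u)"
        using der[of u] False cu ud by auto
      then obtain r where r: "r > 0" and rr: "\<forall>h>0. h < r \<longrightarrow> G u > G (u + h)"
        using DERIV_neg_dec_right by blast
      define h where "h = min (r/2) (d - u)"
      have h: "h > 0" "h < r" using r ud by (auto simp: h_def)
      have "G (u + h) > y" using right[of "u+h"] h by (auto simp: h_def)
      moreover have "G (u + h) < y" using rr h Gy by auto
      ultimately show ?thesis by simp
    qed
  qed
  moreover have "\<not> negligible {max (G c) 0<..<G d}"
    using lt negligible_interval(2)[of "max (G c) 0" "G d"] by (auto simp: max_def split: if_splits)
  ultimately show False using neg negligible_subset by blast
qed



lemma AC_N:
  fixes F :: "real \<Rightarrow> real"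
  assumes ac: "abs_cont_on F {c..d}" and Esub: "E \<subseteq> {c..d}" and negE: "negligible E"
  shows "negligible (F ` E)"
proof -
  have cont: "continuous_on {c..d} F"
    by (rule AC_cont[OF ac]) auto
  show ?thesis
    unfolding negligible_outer_le
  proof (intro allI impI)
    fix e :: real assume e: "e > 0"
    obtain \<delta> where \<delta>: "\<delta> > 0" and H: "\<forall>(m::nat) (a::nat \<Rightarrow> real) (b::nat \<Rightarrow> real).
        (\<forall>i<m. a i < b i \<and> {a i..b i} \<subseteq> {c..d}) \<longrightarrow>
        (\<forall>i<m. \<forall>j<m. i \<noteq> j \<longrightarrow> b i \<le> a j \<or> b j \<le> a i) \<longrightarrow>
        (\<Sum>i<m. b i - a i) < \<delta> \<longrightarrow>
        (\<Sum>i<m. \<bar>F (b i) - F (a i)\<bar>) < e"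
      using ac e unfolding abs_cont_on_def by blast
    have Em: "E \<in> lmeasurable" using negE by (rule negligible_imp_measurable)
    have E0: "measure lebesgue E = 0" using negE by (rule negligible_imp_measure0)
    have Esub': "E \<subseteq> cbox c d" using Esub by simp
    have d2: "\<delta>/2 > 0" using \<delta> by simp
    obtain \<D> where cnt: "countable \<D>"
        and DK: "\<And>K. K \<in> \<D> \<Longrightarrow> K \<subseteq> cbox c d \<and> K \<noteq> {} \<and> (\<exists>u v. K = cbox u v)"
        and pw: "pairwise (\<lambda>A B. interior A \<inter> interior B = {}) \<D>"
        and cov: "E \<subseteq> \<Union>\<D>" and Um: "\<Union>\<D> \<in> lmeasurable"
        and mD: "measure lebesgue (\<Union>\<D>) \<le> measure lebesgue E + \<delta>/2"
      using measurable_outer_intervals_bounded[OF Em Esub' d2] by metis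
    have Kint: "\<exists>u v. K = {u..v} \<and> u \<le> v" if "K \<in> \<D>" for K
      using DK[OF that] by (metis cbox_interval atLeastatMost_empty_iff2 atLeastatMost_empty_iff)
    have Ksub: "K \<subseteq> {c..d}" if "K \<in> \<D>" for K using DK[OF that] by simp
    have Kcomp: "compact K" "K \<noteq> {}" if "K \<in> \<D>" for K
      using Kint[OF that] DK[OF that] by auto
    have "\<forall>K\<in>\<D>. \<exists>p\<in>K. \<exists>q\<in>K. \<forall>y\<in>K. F p \<le> F y \<and> F y \<le> F q"
    proof
      fix K assume K: "K \<in> \<D>"
      have cK: "continuous_on K F" using continuous_on_subset[OF cont Ksub[OF K]] .
      obtain p where "p \<in> K" "\<forall>y\<in>K. F p \<le> F y"
        using continuous_attains_inf[OF Kcomp[OF K] cK] by blast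
      moreover obtain q where "q \<in> K" "\<forall>y\<in>K. F y \<le> F q"
        using continuous_attains_sup[OF Kcomp[OF K] cK] by blast
      ultimately show "\<exists>p\<in>K. \<exists>q\<in>K. \<forall>y\<in>K. F p \<le> F y \<and> F y \<le> F q" by blast
    qed
    then obtain p q where pq: "\<And>K. K \<in> \<D> \<Longrightarrow> p K \<in> K \<and> q K \<in> K \<and> (\<forall>y\<in>K. F (p K) \<le> F y \<and> F y \<le> F (q K))"
      by metis
    have FKm: "F ` K \<in> lmeasurable" if "K \<in> \<D>" for K
      by (rule lmeasurable_compact, rule compact_continuous_image[OF continuous_on_subset[OF cont Ksub[OF that]] Kcomp(1)[OF that]])
    have mFK: "measure lebesgue (F ` K) \<le> \<bar>F (q K) - F (p K)\<bar>" if K: "K \<in> \<D>" for K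
    proof -
      have "F ` K \<subseteq> {F (p K)..F (q K)}" using pq[OF K] by auto
      then have "measure lebesgue (F ` K) \<le> measure lebesgue {F (p K)..F (q K)}"
        by (intro measure_mono_fmeasurable fmeasurableD[OF FKm[OF K]]) (auto intro: lmeasurable_compact)
      also have "\<dots> = F (q K) - F (p K)" using pq[OF K] by simp
      finally show ?thesis by simp
    qed
    have mK: "\<bar>q K - p K\<bar> \<le> measure lebesgue K" if K: "K \<in> \<D>" for K
    proof -
      have "{min (p K) (q K)..max (p K) (q K)} \<subseteq> K"
        using Kint[OF K] pq[OF K] by auto
      then have "measure lebesgue {min (p K) (q K)..max (p K) (q K)} \<le> measure lebesgue K"
        by (intro measure_mono_fmeasurable) (auto intro: lmeasurable_compact Kcomp[OF K])
      then show ?thesis by (simp add: abs_real_def min_def max_def split: if_splits)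
    qed
    have key: "(\<Sum>K\<in>\<D>'. \<bar>F (q K) - F (p K)\<bar>) < e" if D': "\<D>' \<subseteq> \<D>" "finite \<D>'" for \<D>'
    proof -
      define D2 where "D2 = {K\<in>\<D>'. p K \<noteq> q K}"
      have fD2: "finite D2" "D2 \<subseteq> \<D>" using D' by (auto simp: D2_def)
      have s1: "(\<Sum>K\<in>\<D>'. \<bar>F (q K) - F (p K)\<bar>) = (\<Sum>K\<in>D2. \<bar>F (q K) - F (p K)\<bar>)"
        using D' by (intro sum.mono_neutral_right) (auto simp: D2_def)
      define m where "m = card D2"
      obtain gg where bij: "bij_betw gg {0..<m} D2"
        using ex_bij_betw_nat_finite[OF fD2(1)] unfolding m_def by blast
      define a where "a i = min (p (gg i)) (q (gg i))" for i
      define b where "b i = max (p (gg i)) (q (gg i))" for i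
      have gi: "gg i \<in> D2" if "i < m" for i using bij that by (auto simp: bij_betw_def)
      have gD: "gg i \<in> \<D>" "p (gg i) \<noteq> q (gg i)" if "i<m" for i
        using gi[OF that] fD2 by (auto simp: D2_def)
      have abK: "{a i..b i} \<subseteq> gg i" if "i<m" for i
        using Kint[OF gD(1)[OF that]] pq[OF gD(1)[OF that]] by (auto simp: a_def b_def)
      have ablt: "a i < b i" if "i<m" for i
        using gD(2)[OF that] by (auto simp: a_def b_def min_def max_def)
      have 1: "\<forall>i<m. a i < b i \<and> {a i..b i} \<subseteq> {c..d}"
        using ablt abK Ksub gD(1) by (meson subset_trans)
      have 2: "\<forall>i<m. \<forall>j<m. i \<noteq> j \<longrightarrow> b i \<le> a j \<or> b j \<le> a i"
      proof (intro allI impI)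
        fix i j assume ij: "i<m" "j<m" "i\<noteq>j"
        have ne: "gg i \<noteq> gg j" using bij ij by (auto simp: bij_betw_def inj_on_def)
        have dis: "interior (gg i) \<inter> interior (gg j) = {}"
          using pw gD(1)[OF ij(1)] gD(1)[OF ij(2)] ne by (auto simp: pairwise_def)
        have ii: "{a i<..<b i} \<subseteq> interior (gg i)" using interior_mono[OF abK[OF ij(1)]] by simp
        have jj: "{a j<..<b j} \<subseteq> interior (gg j)" using interior_mono[OF abK[OF ij(2)]] by simp
        show "b i \<le> a j \<or> b j \<le> a i"
        proof (rule ccontr)
          assume "\<not> (b i \<le> a j \<or> b j \<le> a i)"
          then have "(max (a i) (a j) + min (b i) (b j))/2 \<in> {a i<..<b i} \<inter> {a j<..<b j}"
            using ablt[OF ij(1)] ablt[OF ij(2)] by (auto simp: min_def max_def)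
          then show False using ii jj dis by blast
        qed
      qed
      have re1: "(\<Sum>i<m. h (gg i)) = (\<Sum>K\<in>D2. h K)" for h :: "real set \<Rightarrow> real"
        using sum.reindex_bij_betw[OF bij, of h] by (simp add: atLeast0LessThan)
      have len: "(\<Sum>i<m. b i - a i) = (\<Sum>K\<in>D2. \<bar>q K - p K\<bar>)"
      proof -
        have "(\<Sum>i<m. b i - a i) = (\<Sum>i<m. \<bar>q (gg i) - p (gg i)\<bar>)"
          by (intro sum.cong) (auto simp: a_def b_def min_def max_def)
        then show ?thesis using re1[of "\<lambda>K. \<bar>q K - p K\<bar>"] by simp
      qed
      have fsum: "(\<Sum>i<m. \<bar>F (b i) - F (a i)\<bar>) = (\<Sum>K\<in>D2. \<bar>F (q K) - F (p K)\<bar>)"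
      proof -
        have "(\<Sum>i<m. \<bar>F (b i) - F (a i)\<bar>) = (\<Sum>i<m. \<bar>F (q (gg i)) - F (p (gg i))\<bar>)"
          by (intro sum.cong) (auto simp: a_def b_def min_def max_def)
        then show ?thesis using re1[of "\<lambda>K. \<bar>F (q K) - F (p K)\<bar>"] by simp
      qed
      have Kmeas: "K \<in> lmeasurable" if "K \<in> \<D>" for K using Kcomp[OF that] by (simp add: lmeasurable_compact)
      have pwn: "pairwise (\<lambda>S T. negligible (S \<inter> T)) D2"
        unfolding pairwise_def
      proof (intro ballI impI)
        fix S T assume ST: "S \<in> D2" "T \<in> D2" "S \<noteq> T"
        obtain u v where S: "S = {u..v}" using Kint ST fD2 by blast
        obtain u' v' where T: "T = {u'..v'}" using Kint ST fD2 by blast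
        have dis: "interior S \<inter> interior T = {}" using pw ST fD2 by (auto simp: pairwise_def)
        have "S \<inter> T \<subseteq> {u,v,u',v'}"
        proof
          fix x assume x: "x \<in> S \<inter> T"
          show "x \<in> {u,v,u',v'}"
          proof (rule ccontr)
            assume "x \<notin> {u,v,u',v'}"
            then have "x \<in> interior S \<inter> interior T" using x S T by auto
            then show False using dis by blast
          qed
        qed
        then show "negligible (S \<inter> T)" by (rule negligible_subset[rotated]) auto
      qed
      have "(\<Sum>K\<in>D2. \<bar>q K - p K\<bar>) \<le> (\<Sum>K\<in>D2. measure lebesgue K)"
        using mK fD2 by (intro sum_mono) auto
      also have "\<dots> = measure lebesgue (\<Union>D2)"
        using fD2 Kmeas pwn by (intro measure_negligible_finite_Union[symmetric]) auto
      also have "\<dots> \<le> measure lebesgue (\<Union>\<D>)"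
      proof (intro measure_mono_fmeasurable Um)
        show "\<Union>D2 \<subseteq> \<Union>\<D>" using fD2 by auto
        show "\<Union>D2 \<in> sets lebesgue" using fD2 Kmeas by (intro sets.finite_Union) auto
      qed
      also have "\<dots> \<le> \<delta>/2" using mD E0 by simp
      finally have 3: "(\<Sum>i<m. b i - a i) < \<delta>" using len \<delta> by simp
      have "(\<Sum>i<m. \<bar>F (b i) - F (a i)\<bar>) < e"
        by (rule mp[OF mp[OF mp[OF spec[OF spec[OF spec[OF H, of m], of a], of b] 1] 2] 3])
      then show ?thesis using s1 fsum by simp
    qed
    have bound: "measure lebesgue (\<Union>K\<in>\<D>'. F ` K) \<le> e" if D': "\<D>' \<subseteq> \<D>" "finite \<D>'" for \<D>'
    proof -
      have "measure lebesgue (\<Union>K\<in>\<D>'. F ` K) \<le> (\<Sum>K\<in>\<D>'. measure lebesgue (F ` K))"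
        using D' FKm by (intro measure_UNION_le) auto
      also have "\<dots> \<le> (\<Sum>K\<in>\<D>'. \<bar>F (q K) - F (p K)\<bar>)"
        using D' mFK by (intro sum_mono) auto
      also have "\<dots> \<le> e" using key[OF D'] by simp
      finally show ?thesis .
    qed
    have T1: "(\<Union>K\<in>\<D>. F ` K) \<in> lmeasurable"
      by (rule fmeasurable_UN_bound[OF cnt FKm bound]) auto
    have T2: "measure lebesgue (\<Union>K\<in>\<D>. F ` K) \<le> e"
      by (rule measure_UN_bound[OF cnt FKm bound]) auto
    have "F ` E \<subseteq> (\<Union>K\<in>\<D>. F ` K)" using cov by blast
    then show "\<exists>T. F ` E \<subseteq> T \<and> T \<in> lmeasurable \<and> measure lebesgue T \<le> e"
      using T1 T2 by blast
  qed
qed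



lemma AC_unif:
  assumes ac: "abs_cont_on f I"
    and conv: "\<And>x y. x \<in> I \<Longrightarrow> y \<in> I \<Longrightarrow> x \<le> y \<Longrightarrow> {x..y} \<subseteq> I"
    and e: "e > 0"
  shows "\<exists>d>0. \<forall>p\<in>I. \<forall>q\<in>I. \<bar>p - q\<bar> < d \<longrightarrow> \<bar>f p - f q\<bar> < e"
proof -
  obtain d where d: "d > 0" and H: "\<forall>(m::nat) (a::nat \<Rightarrow> real) (b::nat \<Rightarrow> real).
        (\<forall>i<m. a i < b i \<and> {a i..b i} \<subseteq> I) \<longrightarrow>
        (\<forall>i<m. \<forall>j<m. i \<noteq> j \<longrightarrow> b i \<le> a j \<or> b j \<le> a i) \<longrightarrow>
        (\<Sum>i<m. b i - a i) < d \<longrightarrow>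
        (\<Sum>i<m. \<bar>f (b i) - f (a i)\<bar>) < e"
    using ac e unfolding abs_cont_on_def by blast
  have "\<forall>p\<in>I. \<forall>q\<in>I. \<bar>p - q\<bar> < d \<longrightarrow> \<bar>f p - f q\<bar> < e"
  proof (intro ballI impI)
    fix x x' assume x: "x \<in> I" and x': "x' \<in> I" and dd: "\<bar>x - x'\<bar> < d"
    show "\<bar>f x - f x'\<bar> < e"
    proof (cases "x' = x")
      case True then show ?thesis using e by simp
    next
      case False
      have A: "\<forall>i<(1::nat). min x x' < max x x' \<and> {min x x'..max x x'} \<subseteq> I"
        using False conv x x' by (auto simp: min_def max_def)
      have B: "(\<Sum>i<(1::nat). max x x' - min x x') < d"
        using dd by (auto simp: min_def max_def)
      have H1: "(\<forall>i<(1::nat). min x x' < max x x' \<and> {min x x'..max x x'} \<subseteq> I) \<longrightarrow>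
         (\<forall>i<(1::nat). \<forall>j<(1::nat). i \<noteq> j \<longrightarrow> max x x' \<le> min x x' \<or> max x x' \<le> min x x') \<longrightarrow>
         (\<Sum>i<(1::nat). max x x' - min x x') < d \<longrightarrow>
         (\<Sum>i<(1::nat). \<bar>f (max x x') - f (min x x')\<bar>) < e"
        by (rule spec[OF spec[OF spec[OF H, of 1], of "\<lambda>_. min x x'"], of "\<lambda>_. max x x'"])
      have "(\<Sum>i<(1::nat). \<bar>f (max x x') - f (min x x')\<bar>) < e"
        using H1 A B by simp
      then show ?thesis by (auto simp: min_def max_def abs_minus_commute split: if_splits)
    qed
  qed
  then show ?thesis using d by blast
qed

lemma aux1:
  fixes A B K :: real
  assumes "A \<le> 1" "B \<le> 1" "1 - B \<le> K" "A \<ge> 0"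
  shows "A - A*B \<le> K \<and> 0 \<le> A - A*B"
proof -
  have h1: "A * (1-B) \<le> 1 * (1 - B)" using assms by (intro mult_right_mono) auto
  have h2: "0 \<le> A*(1-B)" using assms by simp
  have h1': "A - A*B \<le> 1 - B" using h1 by (simp add: right_diff_distrib)
  have h2': "0 \<le> A - A*B" using h2 by (simp add: right_diff_distrib)
  show ?thesis using h1' h2' assms(3) by (auto intro: order_trans)
qed

lemma piece:
  fixes W :: "real \<Rightarrow> real" and tt :: "nat \<Rightarrow> real"
  assumes t0: "tt 0 = c" and tN: "tt N = sT" and tm: "\<And>j. j < N \<Longrightarrow> tt j < tt (Suc j)"
    and hs: "sT - c \<le> h" and Wc: "W c \<ge> 0"
    and ac: "\<And>j. j < N \<Longrightarrow> abs_cont_on W {tt j..<tt (Suc j)}"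
    and left: "\<And>j. 1 \<le> j \<Longrightarrow> j \<le> N \<Longrightarrow> \<exists>L. (W \<longlongrightarrow> L) (at_left (tt j)) \<and> L \<ge> W (tt j)"
    and d01: "dA > dB" "dB > 0" and kap: "\<kappa> > 0" "\<kappa> = 2*dA - 2*dB*exp(\<kappa>*h)"
    and der: "\<And>j. j < N \<Longrightarrow>
       AE x in lebesgue. x \<in> {tt j..<tt (Suc j)} \<longrightarrow>
         (\<exists>D. (W has_real_derivative D) (at x) \<and>
              D \<le> - 2 * dA * W x + 2 * dB * (SUP \<theta>\<in>{c..x}. W \<theta>))"
    and x: "x \<in> {c..sT}"
  shows "W x \<le> W c * exp (- \<kappa> * (x - c))"
proof -
  have tmono: "tt i \<le> tt j" if "i \<le> j" "j \<le> N" for i j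
    using that
  proof (induction j)
    case 0 then show ?case by simp
  next
    case (Suc j)
    show ?case
    proof (cases "i = Suc j")
      case True then show ?thesis by simp
    next
      case False
      then have "tt i \<le> tt j" using Suc by auto
      also have "\<dots> < tt (Suc j)" using tm Suc by auto
      finally show ?thesis by simp
    qed
  qed
  have trange: "c \<le> tt j \<and> tt j \<le> sT" if "j \<le> N" for j
    using tmono[of 0 j] tmono[of j N] that t0 tN by auto
  define M where "M = W c"
  have M0: "M \<ge> 0" using Wc by (simp add: M_def)
  have main: "W y \<le> (M+\<epsilon>)*exp(-\<kappa>*(y-c)) + \<epsilon>" if \<epsilon>: "\<epsilon> > 0" and y: "y \<in> {c..sT}" for \<epsilon> y
  proof -
    define z where "z y = (M+\<epsilon>)*exp(-\<kappa>*(y-c)) + \<epsilon>" for y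
    have Me: "M + \<epsilon> > 0" using M0 \<epsilon> by simp
    have zdec: "z q \<le> z p" if "p \<le> q" for p q
      using that kap(1) Me unfolding z_def by (simp add: mult_left_mono)
    have zle: "z y \<le> M + 2*\<epsilon>" if "c \<le> y" for y
      using zdec[OF that] by (simp add: z_def)
    have zlip: "\<bar>z q - z p\<bar> \<le> \<kappa>*(M+\<epsilon>) * (q - p)" if "c \<le> p" "p \<le> q" for p q
    proof -
      have "exp (-\<kappa>*(q-c)) = exp (-\<kappa>*(p-c)) * exp (-\<kappa>*(q-p))"
        by (simp add: exp_add[symmetric] algebra_simps)
      moreover have "1 - exp (-\<kappa>*(q-p)) \<le> \<kappa>*(q-p)"
        using exp_ge_add_one_self[of "-\<kappa>*(q-p)"] by simp
      moreover have "exp (-\<kappa>*(p-c)) \<le> 1" using that kap(1) by simp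
      moreover have "exp (-\<kappa>*(q-p)) \<le> 1" using that kap(1) by simp
      ultimately have ee: "exp (-\<kappa>*(p-c)) - exp (-\<kappa>*(q-c)) \<le> \<kappa>*(q-p) \<and> 0 \<le> exp (-\<kappa>*(p-c)) - exp (-\<kappa>*(q-c))"
        using aux1[of "exp (-\<kappa>*(p-c))" "exp (-\<kappa>*(q-p))" "\<kappa>*(q-p)"] by simp
      have zz: "z p - z q = (M+\<epsilon>)*(exp(-\<kappa>*(p-c)) - exp(-\<kappa>*(q-c)))"
        by (simp add: z_def algebra_simps)
      have "0 \<le> (M+\<epsilon>)*(exp(-\<kappa>*(p-c)) - exp(-\<kappa>*(q-c)))" using ee Me by simp
      then have "\<bar>z q - z p\<bar> = (M+\<epsilon>)*(exp(-\<kappa>*(p-c)) - exp(-\<kappa>*(q-c)))"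
        using zz by linarith
      also have "\<dots> \<le> (M+\<epsilon>) * (\<kappa>*(q-p))"
        using ee Me by (intro mult_left_mono) auto
      finally show ?thesis by (simp add: algebra_simps)
    qed
    have zder: "(z has_real_derivative (-\<kappa>*(M+\<epsilon>)*exp(-\<kappa>*(y-c)))) (at y)" for y
      unfolding z_def by (auto intro!: derivative_eq_intros)
    define \<eta> where "\<eta> = (dA - dB) * \<epsilon> / dB"
    have \<eta>: "\<eta> > 0" "dB * \<eta> = (dA - dB) * \<epsilon>" using d01 \<epsilon> by (auto simp: \<eta>_def)
    have Q: "\<forall>y\<in>{c..tt j}. W y \<le> z y" if "j \<le> N" for j
      using that
    proof (induction j)
      case 0
      show ?case using \<epsilon> by (auto simp: t0 z_def M_def)
    next
      case (Suc j)
      have jN: "j < N" using Suc by simp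
      have IH: "\<forall>y\<in>{c..tt j}. W y \<le> z y" using Suc by simp
      define a where "a = tt j"
      define b where "b = tt (Suc j)"
      have ab: "a < b" using tm[OF jN] by (simp add: a_def b_def)
      have ca: "c \<le> a" using trange[of j] jN by (simp add: a_def)
      have bs: "b \<le> sT" using trange[of "Suc j"] jN by (simp add: b_def)
      have acj: "abs_cont_on W {a..<b}" using ac[OF jN] by (simp add: a_def b_def)
      have conv: "{p..q} \<subseteq> {a..<b}" if "p \<in> {a..<b}" "q \<in> {a..<b}" "p \<le> q" for p q
        using that by auto
      have P: "\<forall>y\<in>{a..<b}. W y \<le> z y"
      proof (rule ccontr)
        assume "\<not> (\<forall>y\<in>{a..<b}. W y \<le> z y)"
        then obtain x1 where x1: "x1 \<in> {a..<b}" "W x1 > z x1" by (auto simp: not_le)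
        define A where "A = {x \<in> {a..x1}. \<forall>y\<in>{a..x}. W y \<le> z y}"
        have aA: "a \<in> A" using IH x1 ca by (auto simp: A_def a_def)
        have bddA: "bdd_above A" by (auto simp: A_def bdd_above_def)
        define u where "u = Sup A"
        have Ale: "x \<le> u" if "x \<in> A" for x using cSup_upper[OF that bddA] by (simp add: u_def)
        have ux1: "u \<le> x1" unfolding u_def using aA by (intro cSup_least) (auto simp: A_def)
        obtain \<rho> where \<rho>: "\<rho> > 0" and rr: "\<forall>p\<in>{a..<b}. \<forall>q\<in>{a..<b}. \<bar>p - q\<bar> < \<rho> \<longrightarrow> \<bar>W p - W q\<bar> < \<eta>"
          using AC_unif[OF acj conv \<eta>(1)] by blast
        have lt: "u - \<rho>/2 < Sup A" using \<rho> by (simp add: u_def)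
        have Ane: "A \<noteq> {}" using aA by blast
        obtain u' where u'A: "u' \<in> A" and u'gt: "u - \<rho>/2 < u'"
          using less_cSupE[OF lt Ane] by blast
        have u'1: "a \<le> u'" "u' \<le> x1" and u'2: "\<forall>y\<in>{a..u'}. W y \<le> z y"
          using u'A by (auto simp: A_def)
        define d where "d = min (u' + \<rho>/2) x1"
        have u'd: "u' \<le> d" "d \<le> x1" using u'1 \<rho> by (auto simp: d_def)
        have db: "d < b" using u'd x1 by simp
        have sub: "{u'..d} \<subseteq> {a..<b}" using u'1 db by auto
        define G where "G = (\<lambda>y. W y - z y)"
        have acG: "abs_cont_on G {u'..d}"
          unfolding G_def
        proof (rule AC_diff_lip[OF AC_mono[OF acj sub]])
          show "0 \<le> \<kappa> * (M + \<epsilon>)" using kap(1) Me by simp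
          fix p q assume "p \<in> {u'..d}" "q \<in> {u'..d}" "p \<le> q"
          then show "\<bar>z q - z p\<bar> \<le> \<kappa> * (M + \<epsilon>) * (q - p)"
            using zlip[of p q] ca u'1 by auto
        qed
        have contG: "continuous_on {u'..d} G" by (rule AC_cont[OF acG]) auto
        obtain N0 where N0P: "{x \<in> space lebesgue. \<not> (x \<in> {tt j..<tt (Suc j)} \<longrightarrow>
             (\<exists>D. (W has_real_derivative D) (at x) \<and>
              D \<le> - 2 * dA * W x + 2 * dB * (SUP \<theta>\<in>{c..x}. W \<theta>)))} \<subseteq> N0"
          and N0: "N0 \<in> null_sets lebesgue"
          by (rule AE_E[OF der[OF jN]]) blast
        define E where "E = N0 \<inter> {u'..d}"
        have negN0: "negligible N0" using N0 by (simp add: negligible_iff_null_sets)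
        have negE: "negligible E"
          by (rule negligible_subset[OF negN0]) (auto simp: E_def)
        have negGE: "negligible (G ` E)"
          by (rule AC_N[OF acG _ negE]) (auto simp: E_def)
        have derG: "\<exists>D<0. (G has_real_derivative D) (at x)"
          if xx: "x \<in> {u'..<d}" "x \<notin> E" "G x > 0" for x
        proof -
          have xN: "x \<notin> N0" using xx by (auto simp: E_def)
          have "x \<in> {u'..d}" using xx by auto
          then have "x \<in> {a..<b}" using sub by blast
          then have xab: "x \<in> {tt j..<tt (Suc j)}" by (simp add: a_def b_def)
          have Px: "x \<in> {tt j..<tt (Suc j)} \<longrightarrow>
             (\<exists>D. (W has_real_derivative D) (at x) \<and>
              D \<le> - 2 * dA * W x + 2 * dB * (SUP \<theta>\<in>{c..x}. W \<theta>))"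
          proof (rule ccontr)
            assume nP: "\<not> (x \<in> {tt j..<tt (Suc j)} \<longrightarrow>
             (\<exists>D. (W has_real_derivative D) (at x) \<and>
              D \<le> - 2 * dA * W x + 2 * dB * (SUP \<theta>\<in>{c..x}. W \<theta>)))"
            have "x \<in> {x \<in> space lebesgue. \<not> (x \<in> {tt j..<tt (Suc j)} \<longrightarrow>
             (\<exists>D. (W has_real_derivative D) (at x) \<and>
              D \<le> - 2 * dA * W x + 2 * dB * (SUP \<theta>\<in>{c..x}. W \<theta>)))}"
              using nP by simp
            then have "x \<in> N0" using N0P by (rule subsetD[rotated])
            then show False using xN by simp
          qed
          obtain D where D: "(W has_real_derivative D) (at x)"
            "D \<le> - 2 * dA * W x + 2 * dB * (SUP \<theta>\<in>{c..x}. W \<theta>)"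
            using mp[OF Px xab] by blast
          have Sb: "(SUP \<theta>\<in>{c..x}. W \<theta>) \<le> M + 2*\<epsilon> + \<eta>"
          proof (rule cSUP_least)
            show "{c..x} \<noteq> {}" using xx ca u'1 by auto
            fix \<theta> assume th: "\<theta> \<in> {c..x}"
            show "W \<theta> \<le> M + 2*\<epsilon> + \<eta>"
            proof (cases "\<theta> \<le> u'")
              case True
              then have "W \<theta> \<le> z \<theta>"
                using IH u'2 th by (cases "\<theta> \<le> a") (auto simp: a_def)
              also have "\<dots> \<le> M + 2*\<epsilon>" using zle th by auto
              finally show ?thesis using \<eta> by simp
            next
              case False
              have "\<bar>\<theta> - u'\<bar> < \<rho>" using False th xx \<rho> by (auto simp: d_def)
              moreover have "\<theta> \<in> {a..<b}" "u' \<in> {a..<b}" using False th xx db u'1 u'd by auto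
              ultimately have "\<bar>W \<theta> - W u'\<bar> < \<eta>" using rr by blast
              moreover have "W u' \<le> z u'" using u'2 u'1 by auto
              moreover have "z u' \<le> M + 2*\<epsilon>" using zle ca u'1 by auto
              ultimately show ?thesis by linarith
            qed
          qed
          define Y where "Y = (M+\<epsilon>)*exp(-\<kappa>*(x-c))"
          have zx: "z x = Y + \<epsilon>" by (simp add: z_def Y_def)
          have Wx: "W x > z x" using xx by (simp add: G_def)
          have xsT: "x - c \<le> h" using xx db bs hs by auto
          have eY: "exp (\<kappa>*h) * Y \<ge> M + \<epsilon>"
          proof -
            have "exp (\<kappa>*h) * Y = (M+\<epsilon>) * exp (\<kappa>*(h - (x - c)))"
              by (simp add: Y_def exp_add[symmetric] algebra_simps)
            also have "\<dots> \<ge> (M+\<epsilon>) * 1" using Me xsT kap(1) by (intro mult_left_mono) auto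
            finally show ?thesis by simp
          qed
          have kY0: "\<kappa> * Y = (2*dA - 2*dB*exp(\<kappa>*h)) * Y"
            using kap(2) by (rule arg_cong[where f="\<lambda>t. t*Y"])
          have kY: "\<kappa> * Y = 2*(dA*Y) - 2*(dB*(exp (\<kappa>*h) * Y))"
            using kY0 by (simp add: algebra_simps)
          have "D + \<kappa> * Y < 0"
          proof -
            define S where "S = (SUP \<theta>\<in>{c..x}. W \<theta>)"
            have f1: "D \<le> 2*(dB*S) - 2*(dA*W x)" using D(2) by (simp add: S_def algebra_simps)
            have "dB * S \<le> dB * (M + 2*\<epsilon> + \<eta>)"
              using Sb d01 by (simp add: S_def)
            then have f2: "dB * S \<le> dB*M + 2*(dB*\<epsilon>) + dB*\<eta>" by (simp add: algebra_simps)
            have f3: "dA * z x < dA * W x" using Wx d01 by simp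
            have f4: "dA * z x = dA*Y + dA*\<epsilon>" using zx by (simp add: algebra_simps)
            have "dB*(M + \<epsilon>) \<le> dB*(exp (\<kappa>*h) * Y)" using eY d01 by simp
            then have f5: "dB*M + dB*\<epsilon> \<le> dB*(exp (\<kappa>*h) * Y)" by (simp add: algebra_simps)
            have f7: "dB*\<eta> = dA*\<epsilon> - dB*\<epsilon>" using \<eta>(2) by (simp add: algebra_simps)
            show ?thesis using f1 f2 f3 f4 f5 kY f7 by linarith
          qed
          moreover have "(G has_real_derivative (D - (-\<kappa>*(M+\<epsilon>)*exp(-\<kappa>*(x-c))))) (at x)"
            unfolding G_def by (intro DERIV_diff D(1) zder)
          ultimately show ?thesis by (intro exI[of _ "D - (-\<kappa>*(M+\<epsilon>)*exp(-\<kappa>*(x-c)))"]) (auto simp: Y_def)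
        qed
        have Gu': "G u' \<le> 0" using u'2 u'1 by (auto simp: G_def)
        have Gle: "G y \<le> 0" if y: "y \<in> {u'..d}" for y
        proof -
          have "G y \<le> max (G u') 0"
          proof (rule growth[OF _ _ negGE])
            show "u' \<le> y" using y by simp
            show "continuous_on {u'..y} G" using continuous_on_subset[OF contG] y by auto
            fix x assume "x \<in> {u'..<y}" "x \<notin> E" "G x > 0"
            then show "\<exists>D<0. (G has_real_derivative D) (at x)" using derG[of x] y by auto
          qed
          then show ?thesis using Gu' by simp
        qed
        have "d \<in> A"
          unfolding A_def
        proof (intro CollectI conjI ballI)
          show "d \<in> {a..x1}" using u'd u'1 by auto
          fix y assume y: "y \<in> {a..d}"
          show "W y \<le> z y"
          proof (cases "y \<le> u'")
            case True then show ?thesis using u'2 y by auto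
          next
            case False then show ?thesis using Gle[of y] y by (auto simp: G_def)
          qed
        qed
        then have "d \<le> u" by (rule Ale)
        show False
        proof (cases "d = x1")
          case True
          then have "x1 \<in> A" using \<open>d \<in> A\<close> by simp
          then have "W x1 \<le> z x1" using x1 by (auto simp: A_def)
          then show False using x1 by simp
        next
          case False
          then have "d = u' + \<rho>/2" by (auto simp: d_def min_def split: if_splits)
          then show False using \<open>d \<le> u\<close> u'gt by simp
        qed
      qed
      obtain L where L: "(W \<longlongrightarrow> L) (at_left b)" "L \<ge> W b"
        using left[of "Suc j"] jN by (auto simp: b_def)
      have "(z \<longlongrightarrow> z b) (at_left b)"
        unfolding z_def by (intro tendsto_intros)
      moreover have "eventually (\<lambda>y. W y \<le> z y) (at_left b)"
      proof -
        have "eventually (\<lambda>y. y \<in> {a<..<b}) (at_left b)" using ab by (rule eventually_at_left_real)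
        then show ?thesis by eventually_elim (use P in auto)
      qed
      ultimately have "L \<le> z b" using L(1)
        by (intro tendsto_le[of "at_left b" z "z b" W L]) auto
      then have Wb: "W b \<le> z b" using L(2) by simp
      show ?case
      proof
        fix y assume y: "y \<in> {c..tt (Suc j)}"
        show "W y \<le> z y"
        proof (cases "y \<le> a")
          case True then show ?thesis using IH y by (auto simp: a_def)
        next
          case False
          show ?thesis
          proof (cases "y = b")
            case True then show ?thesis using Wb by simp
          next
            case False
            then show ?thesis using P \<open>\<not> y \<le> a\<close> y by (auto simp: b_def)
          qed
        qed
      qed
    qed
    show ?thesis using Q[of N] y tN by (auto simp: z_def)
  qed
  define E where "E = exp (-\<kappa>*(x-c))"
  have E0: "E > 0" by (simp add: E_def)
  show ?thesis
  proof (rule field_le_epsilon)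
    fix e :: real assume e: "e > 0"
    have ep: "e/(E+1) > 0" using e E0 by simp
    have "W x \<le> (M + e/(E+1)) * E + e/(E+1)"
      using main[OF ep x] by (simp add: E_def)
    also have "\<dots> = M * E + e/(E+1) * (E+1)" by (simp only: distrib_right distrib_left mult_1_left mult_1_right add.assoc)
    also have "\<dots> = M * E + e" using E0 by simp
    finally show "W x \<le> W c * exp (- \<kappa> * (x - c)) + e" by (simp add: M_def E_def)
  qed
qed



lemma delta_tau_prop:
  assumes d: "\<delta>0 > \<delta>1" "\<delta>1 > 0" and h: "h > 0"
  shows "delta_tau \<delta>0 \<delta>1 h > 0 \<and> delta_tau \<delta>0 \<delta>1 h = \<delta>0 - \<delta>1 * exp (2 * delta_tau \<delta>0 \<delta>1 h * h)"
proof -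
  define g where "g x = x - \<delta>0 + \<delta>1 * exp (2*x*h)" for x
  have cont: "continuous_on {0..\<delta>0} g" unfolding g_def by (intro continuous_intros)
  have g0: "g 0 \<le> 0" using d by (simp add: g_def)
  have g1: "0 \<le> g \<delta>0" using d by (simp add: g_def)
  have "\<delta>0 > 0" using d by simp
  then obtain x where x: "0 \<le> x" "x \<le> \<delta>0" "g x = 0"
    using IVT'[of g 0 0 \<delta>0, OF g0 g1] cont by auto
  have "x \<noteq> 0" using x d by (auto simp: g_def)
  then have P: "x > 0 \<and> x = \<delta>0 - \<delta>1 * exp (2 * x * h)" using x by (auto simp: g_def algebra_simps)
  have U: "y = x" if "y > 0 \<and> y = \<delta>0 - \<delta>1 * exp (2 * y * h)" for y
  proof (rule ccontr)
    assume "y \<noteq> x"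
    then consider "y < x" | "x < y" by linarith
    then show False
    proof cases
      case 1
      then have "exp (2*y*h) < exp (2*x*h)" using h by simp
      then have "\<delta>1 * exp (2*y*h) < \<delta>1 * exp (2*x*h)" using d by simp
      then show False using 1 P that by linarith
    next
      case 2
      then have "exp (2*x*h) < exp (2*y*h)" using h by simp
      then have "\<delta>1 * exp (2*x*h) < \<delta>1 * exp (2*y*h)" using d by simp
      then show False using 2 P that by linarith
    qed
  qed
  have eq: "delta_tau \<delta>0 \<delta>1 h = x"
    unfolding delta_tau_def by (rule the_equality, rule P, rule U)
  have "?thesis = (x > 0 \<and> x = \<delta>0 - \<delta>1 * exp (2 * x * h))" using eq by simp
  then show ?thesis using P by (rule iffD2)
qed

theorem lemma2:
  fixes s :: "nat \<Rightarrow> real" and h \<delta>0 \<delta>1 :: real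
    and n :: "nat \<Rightarrow> nat" and t :: "nat \<Rightarrow> nat \<Rightarrow> real"
    and W :: "real \<Rightarrow> real"
  assumes s_mono: "strict_mono s"
    and s_lim: "filterlim s at_top sequentially"
    and h_pos: "h > 0"
    and s_step: "\<And>k. s (Suc k) - s k \<le> h"
    and t_first: "\<And>k. t k 0 = s k"
    and t_last: "\<And>k. t k (n k) = s (Suc k)"
    and t_mono: "\<And>k j. j < n k \<Longrightarrow> t k j < t k (Suc j)"
    and W_nonneg: "\<And>x. x \<ge> s 0 \<Longrightarrow> W x \<ge> 0"
    and W_ac: "\<And>k j. j < n k \<Longrightarrow> abs_cont_on W {t k j..<t k (Suc j)}"
    and W_left: "\<And>k j. 1 \<le> j \<Longrightarrow> j \<le> n k \<Longrightarrow>
                   \<exists>L. (W \<longlongrightarrow> L) (at_left (t k j)) \<and> L \<ge> W (t k j)"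
    and \<delta>_order: "\<delta>0 > \<delta>1" "\<delta>1 > 0"
    and W_deriv: "\<And>k j. j < n k \<Longrightarrow>
       AE x in lebesgue. x \<in> {t k j..<t k (Suc j)} \<longrightarrow>
         (\<exists>D. (W has_real_derivative D) (at x) \<and>
              D \<le> - 2 * \<delta>0 * W x + 2 * \<delta>1 * (SUP \<theta>\<in>{s k..x}. W \<theta>))"
  shows "\<And>x. x \<ge> s 0 \<Longrightarrow>
           W x \<le> exp (- 2 * delta_tau \<delta>0 \<delta>1 h * (x - s 0)) * W (s 0)"
proof -
  fix x assume x: "x \<ge> s 0"
  define lam where "lam = delta_tau \<delta>0 \<delta>1 h"
  have dp: "delta_tau \<delta>0 \<delta>1 h > 0 \<and> delta_tau \<delta>0 \<delta>1 h = \<delta>0 - \<delta>1 * exp (2 * delta_tau \<delta>0 \<delta>1 h * h)"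
    by (rule delta_tau_prop[OF \<delta>_order h_pos])
  have lam: "lam > 0" "lam = \<delta>0 - \<delta>1 * exp (2 * lam * h)"
    unfolding lam_def using dp by (rule conjunct1, rule conjunct2)
  define \<kappa> where "\<kappa> = 2 * lam"
  have kap1: "\<kappa> > 0" using lam(1) by (simp add: \<kappa>_def)
  have kap2: "\<kappa> = 2*\<delta>0 - 2*\<delta>1*exp(\<kappa>*h)"
  proof -
    have "2 * lam = 2 * (\<delta>0 - \<delta>1 * exp (2 * lam * h))" using lam(2) by (rule arg_cong)
    then show ?thesis by (simp add: \<kappa>_def algebra_simps)
  qed
  have s_le: "s i \<le> s j" if "i \<le> j" for i j
    using s_mono that by (simp add: strict_mono_less_eq)
  have pc: "W y \<le> W (s k) * exp (- \<kappa> * (y - s k))" if y: "y \<in> {s k..s (Suc k)}" for k y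
  proof (rule piece[where tt="t k" and N="n k" and sT="s (Suc k)" and h=h and dA=\<delta>0 and dB=\<delta>1])
    show "t k 0 = s k" by (rule t_first)
    show "t k (n k) = s (Suc k)" by (rule t_last)
    show "\<And>j. j < n k \<Longrightarrow> t k j < t k (Suc j)" by (rule t_mono)
    show "s (Suc k) - s k \<le> h" by (rule s_step)
    show "W (s k) \<ge> 0" using W_nonneg s_le[of 0 k] by simp
    show "\<And>j. j < n k \<Longrightarrow> abs_cont_on W {t k j..<t k (Suc j)}" by (rule W_ac)
    show "\<And>j. 1 \<le> j \<Longrightarrow> j \<le> n k \<Longrightarrow> \<exists>L. (W \<longlongrightarrow> L) (at_left (t k j)) \<and> L \<ge> W (t k j)"
      by (rule W_left)
    show "\<delta>0 > \<delta>1" "\<delta>1 > 0" by (rule \<delta>_order)+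
    show "\<kappa> > 0" by (rule kap1)
    show "\<kappa> = 2*\<delta>0 - 2*\<delta>1*exp(\<kappa>*h)" by (rule kap2)
    show "\<And>j. j < n k \<Longrightarrow>
       AE x in lebesgue. x \<in> {t k j..<t k (Suc j)} \<longrightarrow>
         (\<exists>D. (W has_real_derivative D) (at x) \<and>
              D \<le> - 2 * \<delta>0 * W x + 2 * \<delta>1 * (SUP \<theta>\<in>{s k..x}. W \<theta>))" by (rule W_deriv)
    show "y \<in> {s k..s (Suc k)}" by (rule y)
  qed
  have dec: "W (s k) \<le> exp (- \<kappa> * (s k - s 0)) * W (s 0)" for k
  proof (induction k)
    case 0 then show ?case by simp
  next
    case (Suc k)
    have ee: "exp (- \<kappa> * (s k - s 0)) * exp (- \<kappa> * (s (Suc k) - s k)) = exp (- \<kappa> * (s (Suc k) - s 0))"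
      by (subst exp_add[symmetric]) (simp add: algebra_simps)
    have "s k \<le> s (Suc k)" using s_le[of k "Suc k"] by simp
    then have "W (s (Suc k)) \<le> W (s k) * exp (- \<kappa> * (s (Suc k) - s k))" using pc[of "s (Suc k)" k] by simp
    also have "\<dots> \<le> exp (- \<kappa> * (s k - s 0)) * W (s 0) * exp (- \<kappa> * (s (Suc k) - s k))"
      using Suc by (intro mult_right_mono) auto
    also have "\<dots> = (exp (- \<kappa> * (s k - s 0)) * exp (- \<kappa> * (s (Suc k) - s k))) * W (s 0)"
      by (simp only: mult_ac)
    also have "\<dots> = exp (- \<kappa> * (s (Suc k) - s 0)) * W (s 0)"
      using ee by simp
    finally show ?case .
  qed
  obtain N where N: "s N > x"
  proof -
    have "eventually (\<lambda>k. x + 1 \<le> s k) sequentially"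
      using s_lim by (simp add: filterlim_at_top)
    then obtain N where "\<forall>k\<ge>N. x + 1 \<le> s k" by (auto simp: eventually_sequentially)
    then have "s N > x" by auto
    then show ?thesis by (rule that)
  qed
  define K where "K = (LEAST k. s k > x)"
  have K1: "s K > x" unfolding K_def by (rule LeastI[of _ N]) (rule N)
  have K0: "K \<noteq> 0"
  proof
    assume "K = 0" then show False using K1 x by simp
  qed
  then obtain k where k: "K = Suc k" by (cases K) auto
  have sk: "s k \<le> x"
  proof (rule ccontr)
    assume "\<not> s k \<le> x"
    then have "s k > x" by simp
    then have "K \<le> k" unfolding K_def by (rule Least_le)
    then show False using k by simp
  qed
  have ee2: "exp (- \<kappa> * (s k - s 0)) * exp (- \<kappa> * (x - s k)) = exp (- \<kappa> * (x - s 0))"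
    by (subst exp_add[symmetric]) (simp add: algebra_simps)
  have "W x \<le> W (s k) * exp (- \<kappa> * (x - s k))"
    using pc[of x k] sk K1 k by simp
  also have "\<dots> \<le> exp (- \<kappa> * (s k - s 0)) * W (s 0) * exp (- \<kappa> * (x - s k))"
    using dec[of k] by (intro mult_right_mono) auto
  also have "\<dots> = (exp (- \<kappa> * (s k - s 0)) * exp (- \<kappa> * (x - s k))) * W (s 0)"
    by (simp only: mult_ac)
  also have "\<dots> = exp (- \<kappa> * (x - s 0)) * W (s 0)"
    using ee2 by simp
  also have "\<dots> = exp (- 2 * delta_tau \<delta>0 \<delta>1 h * (x - s 0)) * W (s 0)"
    by (simp add: \<kappa>_def lam_def)
  finally show "W x \<le> exp (- 2 * delta_tau \<delta>0 \<delta>1 h * (x - s 0)) * W (s 0)" .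
qed


end
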